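(* Let $H$ be a finite-dimensional real Hilbert space and let $A = A_1 + A_2$, where $A_1, A_2: H\to H$ are linear operators with $A_1 = A_2^*$, and $A=A^*>0$. Let $\sigma\ge 1/2$, $\tau>0$, and let $y^0,y^1\in H$ be arbitrary and $\varphi^n\in H$. Let $y^{n+1}$, $n\ge1$, be defined by the three-level (multilevel alternating triangle method) scheme $$(E+\sigma\tau A)\frac{y^{n+1}-y^n}{\tau} + \sigma^2\tau^3 A_1A_2\,\frac{y^{n+1}-2y^n+y^{n-1}}{\tau^2} + A y^n = \varphi^n,\quad n=1,2,\dots .$$ Define $$R = \frac{\tau}{2}E + \sigma^2\tau^3 A_1A_2 + \frac{\tau^2}{4}(2\sigma-1)A,$$ $$\mathcal{E}_{n} = \left\|\frac{y^{n}+y^{n-1}}{2}\right\|_A^2 + \left\|\frac{y^{n}-y^{n-1}}{\tau}\right\|_{R}^2 ,\quad n\ge 1.$$ Then $R$ is self-adjoint and positive definite (so $\mathcal{E}_n$ is a squared norm of the pair of consecutive levels), $E+\sigma\tau A$ is self-adjoint positive definite, and for every $n\ge1$, regardless of $\tau$, $$\mathcal{E}_{n+1} \le \mathcal{E}_n + \frac{\tau}{2}\,\|\varphi^n\|^2_{(E+\sigma\tau A)^{-1}} .$$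
   Context: $H$ has scalar product $(\cdot,\cdot)$ and norm $\|y\|=(y,y)^{1/2}$; $A^*$ denotes the adjoint. For a self-adjoint positive definite operator $D$ on $H$, $\|y\|_D = (Dy,y)^{1/2}$; in particular $\|\varphi\|^2_{(E+\sigma\tau A)^{-1}} = ((E+\sigma\tau A)^{-1}\varphi,\varphi)$. $E$ denotes the identity operator on $H$. *)

theory Defs
  imports "HOL-Analysis.Analysis"
begin

text \<open>A finite-dimensional real Hilbert space is modelled by a type of class euclidean_space.
  Operators are functions; linearity is stated explicitly. Adjoint is the library adjoint.\<close>

definition self_adjoint :: "('a::euclidean_space \<Rightarrow> 'a) \<Rightarrow> bool" where
  "self_adjoint D \<longleftrightarrow> linear D \<and> adjoint D = D"

definition pos_def :: "('a::euclidean_space \<Rightarrow> 'a) \<Rightarrow> bool" where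
  "pos_def D \<longleftrightarrow> (\<forall>x. x \<noteq> 0 \<longrightarrow> inner (D x) x > 0)"

definition dnorm2 :: "('a::euclidean_space \<Rightarrow> 'a) \<Rightarrow> 'a \<Rightarrow> real" where
  "dnorm2 D y = inner (D y) y"

end

theory Submission
  imports Defs "HOL-Analysis.Analysis"
begin

lemma core:
  fixes A C :: "'a::real_inner \<Rightarrow> 'a"
  assumes lA: "linear A" and lC: "linear C"
    and sA: "\<And>x y. inner (A x) y = inner (A y) x"
    and sC: "\<And>x y. inner (C x) y = inner (C y) x"
    and phi: "\<phi> = v2 + (\<sigma>*\<tau>) *\<^sub>R A v2 + (\<sigma>^2*\<tau>^2) *\<^sub>R C (v2 - v1) + A b"
  shows "inner (A (b + (\<tau>/2) *\<^sub>R v2)) (b + (\<tau>/2) *\<^sub>R v2)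
     + (\<tau>/2 * inner v2 v2 + \<sigma>^2*\<tau>^3 * inner (C v2) v2 + \<tau>^2/4*(2*\<sigma>-1) * inner (A v2) v2)
     + 2*\<tau>*(inner ((1/2) *\<^sub>R (v1+v2)) ((1/2) *\<^sub>R (v1+v2)) + \<sigma>*\<tau> * inner (A ((1/2) *\<^sub>R (v1+v2))) ((1/2) *\<^sub>R (v1+v2)))
   = inner (A (b - (\<tau>/2) *\<^sub>R v1)) (b - (\<tau>/2) *\<^sub>R v1)
     + (\<tau>/2 * inner v1 v1 + \<sigma>^2*\<tau>^3 * inner (C v1) v1 + \<tau>^2/4*(2*\<sigma>-1) * inner (A v1) v1)
     + 2*\<tau>*inner \<phi> ((1/2) *\<^sub>R (v1+v2))"
proof -
  have s: "inner (A v1) b = inner (A b) v1" "inner (A v2) b = inner (A b) v2" "inner (A v2) v1 = inner (A v1) v2"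
     "inner (C v1) b = inner (C b) v1" "inner (C v2) b = inner (C b) v2" "inner (C v2) v1 = inner (C v1) v2"
     "inner v1 b = inner b v1" "inner v2 b = inner b v2" "inner v2 v1 = inner v1 v2"
    using sA sC inner_commute by metis+
  show ?thesis
    unfolding phi
    apply (simp add: linear_add[OF lA] linear_diff[OF lA] linear_cmul[OF lA] linear_add[OF lC] linear_diff[OF lC] linear_cmul[OF lC]
       inner_add_left inner_add_right inner_diff_left inner_diff_right s algebra_simps power2_eq_square power3_eq_cube)
    by (simp add: field_simps)
qed

theorem theorem3:
  fixes A A1 A2 :: "'a::euclidean_space \<Rightarrow> 'a"
    and \<sigma> \<tau> :: real
    and y \<phi> :: "nat \<Rightarrow> 'a"
  assumes lin1: "linear A1" and lin2: "linear A2"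
    and adj: "A1 = adjoint A2"
    and Adef: "A = (\<lambda>x. A1 x + A2 x)"
    and Asa: "self_adjoint A" and Apd: "pos_def A"
    and sig: "\<sigma> \<ge> 1/2" and tau: "\<tau> > 0"
    and scheme: "\<And>n. n \<ge> 1 \<Longrightarrow>
        (scaleR (1/\<tau>) (y (Suc n) - y n) + scaleR (\<sigma>*\<tau>) (A (scaleR (1/\<tau>) (y (Suc n) - y n))))
        + scaleR (\<sigma>^2 * \<tau>^3) (A1 (A2 (scaleR (1/\<tau>^2) (y (Suc n) - 2 *\<^sub>R y n + y (n - 1)))))
        + A (y n) = \<phi> n"
  shows "let B = (\<lambda>x. x + scaleR (\<sigma>*\<tau>) (A x));
             R = (\<lambda>x. scaleR (\<tau>/2) x + scaleR (\<sigma>^2 * \<tau>^3) (A1 (A2 x))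
                       + scaleR (\<tau>^2/4 * (2*\<sigma> - 1)) (A x));
             \<E> = (\<lambda>n. dnorm2 A (scaleR (1/2) (y n + y (n - 1)))
                       + dnorm2 R (scaleR (1/\<tau>) (y n - y (n - 1))))
         in self_adjoint R \<and> pos_def R \<and> self_adjoint B \<and> pos_def B \<and>
            (\<forall>n\<ge>1. \<E> (Suc n) \<le> \<E> n + \<tau>/2 * dnorm2 (inv B) (\<phi> n))"
proof -
  define B where "B = (\<lambda>x. x + scaleR (\<sigma>*\<tau>) (A x))"
  define R where "R = (\<lambda>x. scaleR (\<tau>/2) x + scaleR (\<sigma>^2 * \<tau>^3) (A1 (A2 x))
                       + scaleR (\<tau>^2/4 * (2*\<sigma> - 1)) (A x))"
  define E where "E = (\<lambda>n. dnorm2 A (scaleR (1/2) (y n + y (n - 1)))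
                       + dnorm2 R (scaleR (1/\<tau>) (y n - y (n - 1))))"
  define C where "C = (\<lambda>x. A1 (A2 x))"
  have lA: "linear A" using Asa unfolding self_adjoint_def by blast
  have adjA: "adjoint A = A" using Asa unfolding self_adjoint_def by blast
  have sA: "\<And>x z. inner (A x) z = inner (A z) x"
    by (metis adjA adjoint_works[OF lA] inner_commute)
  have lC: "linear C" unfolding C_def using linear_compose[OF lin2 lin1] by (simp add: o_def)
  have sC0: "\<And>x z. inner (C x) z = inner (A2 z) (A2 x)"
    unfolding C_def adj by (metis adjoint_works[OF lin2] inner_commute)
  have sC: "\<And>x z. inner (C x) z = inner (C z) x" using sC0 inner_commute by metis
  have Cnn: "\<And>x. inner (C x) x \<ge> 0" using sC0 by simp
  have Ann: "\<And>x. inner (A x) x \<ge> 0" using Apd unfolding pos_def_def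
    by (metis inner_zero_right order.strict_implies_order order_refl)
  have Rx: "R = (\<lambda>x. scaleR (\<tau>/2) x + scaleR (\<sigma>^2 * \<tau>^3) (C x)
                       + scaleR (\<tau>^2/4 * (2*\<sigma> - 1)) (A x))" unfolding R_def C_def ..
  have lR: "linear R" unfolding Rx
    by (rule linearI) (simp_all add: linear_add[OF lA] linear_cmul[OF lA] linear_add[OF lC] linear_cmul[OF lC] algebra_simps)
  have lB: "linear B" unfolding B_def
    by (rule linearI) (simp_all add: linear_add[OF lA] linear_cmul[OF lA] algebra_simps)
  have saR: "self_adjoint R" unfolding self_adjoint_def
  proof (intro conjI lR adjoint_unique allI)
    fix x z show "R x \<bullet> z = x \<bullet> R z"
      unfolding Rx using sA[of x z] sC[of x z]
      by (simp add: inner_add_left inner_add_right inner_commute)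
  qed
  have saB: "self_adjoint B" unfolding self_adjoint_def
  proof (intro conjI lB adjoint_unique allI)
    fix x z show "B x \<bullet> z = x \<bullet> B z"
      unfolding B_def using sA[of x z]
      by (simp add: inner_add_left inner_add_right inner_commute)
  qed
  have pdR: "pos_def R" unfolding pos_def_def
  proof (intro allI impI)
    fix x :: 'a assume "x \<noteq> 0"
    hence "inner x x > 0" by simp
    moreover have "\<sigma>^2*\<tau>^3 * inner (C x) x \<ge> 0" using Cnn tau by simp
    moreover have "(\<tau>^2/4 * (2*\<sigma> - 1)) * inner (A x) x \<ge> 0" using Ann sig by simp
    ultimately show "inner (R x) x > 0" unfolding Rx using tau
      by (simp add: inner_add_left add_pos_nonneg)
  qed
  have pdB: "pos_def B" unfolding pos_def_def
  proof (intro allI impI)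
    fix x :: 'a assume "x \<noteq> 0"
    hence "inner x x > 0" by simp
    moreover have "\<sigma>*\<tau> * inner (A x) x \<ge> 0" using Ann sig tau by simp
    ultimately show "inner (B x) x > 0" unfolding B_def
      by (simp add: inner_add_left add_pos_nonneg)
  qed
  have injB: "inj B"
  proof (rule injI)
    fix x z assume "B x = B z"
    hence "B (x - z) = 0" by (simp add: linear_diff[OF lB])
    thus "x = z" using pdB unfolding pos_def_def by (metis inner_zero_left less_irrefl right_minus_eq)
  qed
  have surjB: "surj B" using lB injB by (rule linear_inj_imp_surj)
  have sB: "\<And>x z. inner (B x) z = inner (B z) x"
    using sA unfolding B_def by (simp add: inner_add_left inner_add_right inner_commute)
  have step: "E (Suc n) \<le> E n + \<tau>/2 * dnorm2 (inv B) (\<phi> n)" if n1: "n \<ge> 1" for n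
  proof -
    define a where "a = y (n - 1)"
    define b where "b = y n"
    define c where "c = y (Suc n)"
    define v1 where "v1 = (1/\<tau>) *\<^sub>R (b - a)"
    define v2 where "v2 = (1/\<tau>) *\<^sub>R (c - b)"
    define m where "m = (1/2) *\<^sub>R (v1 + v2)"
    have tn: "\<tau> \<noteq> 0" using tau by simp
    have e1: "(1/2) *\<^sub>R (b + a) = b - (\<tau>/2) *\<^sub>R v1" unfolding v1_def using tn
      apply (simp add: algebra_simps scaleR_diff_right)
      by (simp add: scaleR_add_left[symmetric])
    have e2: "(1/2) *\<^sub>R (c + b) = b + (\<tau>/2) *\<^sub>R v2" unfolding v2_def using tn
      apply (simp add: algebra_simps scaleR_diff_right)
      by (simp add: scaleR_add_left[symmetric])
    have e3: "(1/\<tau>^2) *\<^sub>R (c - 2 *\<^sub>R b + a) = (1/\<tau>) *\<^sub>R (v2 - v1)"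
      unfolding v1_def v2_def using tn
      apply (simp add: algebra_simps scaleR_diff_right power2_eq_square)
      by (simp add: scaleR_add_left[symmetric])
    have e4: "(\<sigma>^2 * \<tau>^3) *\<^sub>R A1 (A2 ((1/\<tau>) *\<^sub>R (v2 - v1))) = (\<sigma>^2*\<tau>^2) *\<^sub>R C (v2 - v1)"
    proof -
      have "A1 (A2 ((1/\<tau>) *\<^sub>R (v2 - v1))) = (1/\<tau>) *\<^sub>R C (v2 - v1)"
        using linear_cmul[OF lC] unfolding C_def by blast
      thus ?thesis using tn by (simp add: power3_eq_cube power2_eq_square)
    qed
    have phi: "\<phi> n = v2 + (\<sigma>*\<tau>) *\<^sub>R A v2 + (\<sigma>^2*\<tau>^2) *\<^sub>R C (v2 - v1) + A b"
      using scheme[OF n1] unfolding a_def[symmetric] b_def[symmetric] c_def[symmetric]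
        v2_def[symmetric] e3 e4 linear_cmul[OF lA] by simp
    note cr = core[OF lA lC sA sC phi]
    have E2: "E (Suc n) = inner (A (b + (\<tau>/2) *\<^sub>R v2)) (b + (\<tau>/2) *\<^sub>R v2)
     + (\<tau>/2 * inner v2 v2 + \<sigma>^2*\<tau>^3 * inner (C v2) v2 + \<tau>^2/4*(2*\<sigma>-1) * inner (A v2) v2)"
    proof -
      have "E (Suc n) = dnorm2 A ((1/2) *\<^sub>R (c + b)) + dnorm2 R v2"
        by (simp only: E_def b_def c_def v2_def diff_Suc_1)
      thus ?thesis unfolding e2 dnorm2_def Rx by (simp add: inner_add_left)
    qed
    have E1: "E n = inner (A (b - (\<tau>/2) *\<^sub>R v1)) (b - (\<tau>/2) *\<^sub>R v1)
     + (\<tau>/2 * inner v1 v1 + \<sigma>^2*\<tau>^3 * inner (C v1) v1 + \<tau>^2/4*(2*\<sigma>-1) * inner (A v1) v1)"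
    proof -
      have "E n = dnorm2 A ((1/2) *\<^sub>R (b + a)) + dnorm2 R v1"
        by (simp only: E_def b_def a_def v1_def)
      thus ?thesis unfolding e1 dnorm2_def Rx by (simp add: inner_add_left)
    qed
    have QB: "inner (B m) m = inner m m + \<sigma>*\<tau> * inner (A m) m"
      unfolding B_def by (simp add: inner_add_left)
    have id: "E (Suc n) + 2*\<tau>*inner (B m) m = E n + 2*\<tau>*inner (\<phi> n) m"
      using cr unfolding E1 E2 QB unfolding m_def by simp
    obtain u where u: "\<phi> n = B u" using surjB by (metis surj_def)
    have iu: "inv B (\<phi> n) = u" using u injB by (simp add: inv_f_f)
    have "0 \<le> inner (B (m - (1/2) *\<^sub>R u)) (m - (1/2) *\<^sub>R u)"
      using pdB unfolding pos_def_def by (metis inner_zero_right order.strict_implies_order order_refl)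
    also have "\<dots> = inner (B m) m - inner (B u) m + inner (B u) u / 4"
      using sB[of m u] by (simp add: linear_diff[OF lB] linear_cmul[OF lB] inner_diff_left inner_diff_right algebra_simps)
    finally have h0: "0 \<le> inner (B m) m - inner (B u) m + inner (B u) u / 4" .
    have "inner (\<phi> n) m = inner (B u) m" using u by simp
    hence h1: "inner (\<phi> n) m - inner (B m) m \<le> inner (B u) u / 4" using h0 by linarith
    have h2: "dnorm2 (inv B) (\<phi> n) = inner (B u) u"
      unfolding dnorm2_def iu by (simp add: u inv_f_f[OF injB] inner_commute)
    have h3: "2*\<tau>*(inner (\<phi> n) m - inner (B m) m) \<le> 2*\<tau>*(inner (B u) u / 4)"
      using h1 tau by (intro mult_left_mono) auto
    have h4: "E (Suc n) = E n + 2*\<tau>*(inner (\<phi> n) m - inner (B m) m)"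
      using id by (simp add: right_diff_distrib)
    show ?thesis unfolding h4 h2 using h3 by simp
  qed
  have fin: "self_adjoint R \<and> pos_def R \<and> self_adjoint B \<and> pos_def B \<and>
            (\<forall>n\<ge>1. E (Suc n) \<le> E n + \<tau>/2 * dnorm2 (inv B) (\<phi> n))"
    using saR pdR saB pdB step by blast
  show ?thesis using fin unfolding Let_def E_def B_def R_def .
qed

end
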